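(* If $G$ is a countably infinite HE-homogeneous graph satisfying property $(\ast)$, then $G$ is MB-homogeneous.
   Context: All graphs are undirected and loopless; subgraphs are induced. A homomorphism maps adjacent vertices to adjacent vertices; a monomorphism is an injective homomorphism; a bimorphism is a bijective endomorphism. $G$ is HE-homogeneous if every homomorphism between finite induced subgraphs of $G$ is the restriction of a surjective endomorphism of $G$; $G$ is MB-homogeneous if every monomorphism between finite induced subgraphs of $G$ is the restriction of a bimorphism of $G$. $G$ has property $(\ast)$ if for every surjective monomorphism $f:A\to B$ between finite induced subgraphs of $G$ and every vertex $c\notin A$ there exists a vertex $d\notin B$ such that $f\cup\{(c,d)\}$ is a homomorphism. *)

theory Defs
  imports Main "HOL-Library.Countable_Set"
begin

definition graph :: "'a set \<Rightarrow> ('a \<Rightarrow> 'a \<Rightarrow> bool) \<Rightarrow> bool" where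
  "graph V E \<longleftrightarrow> (\<forall>x y. E x y \<longrightarrow> x \<in> V \<and> y \<in> V) \<and> (\<forall>x y. E x y \<longrightarrow> E y x) \<and> (\<forall>x. \<not> E x x)"

definition is_hom :: "('a \<Rightarrow> 'a \<Rightarrow> bool) \<Rightarrow> 'a set \<Rightarrow> 'a set \<Rightarrow> ('a \<Rightarrow> 'a) \<Rightarrow> bool" where
  "is_hom E A B f \<longleftrightarrow> f ` A \<subseteq> B \<and> (\<forall>x\<in>A. \<forall>y\<in>A. E x y \<longrightarrow> E (f x) (f y))"

definition is_mono :: "('a \<Rightarrow> 'a \<Rightarrow> bool) \<Rightarrow> 'a set \<Rightarrow> 'a set \<Rightarrow> ('a \<Rightarrow> 'a) \<Rightarrow> bool" where
  "is_mono E A B f \<longleftrightarrow> is_hom E A B f \<and> inj_on f A"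

definition surj_endo :: "'a set \<Rightarrow> ('a \<Rightarrow> 'a \<Rightarrow> bool) \<Rightarrow> ('a \<Rightarrow> 'a) \<Rightarrow> bool" where
  "surj_endo V E g \<longleftrightarrow> is_hom E V V g \<and> g ` V = V"

definition bimorphism :: "'a set \<Rightarrow> ('a \<Rightarrow> 'a \<Rightarrow> bool) \<Rightarrow> ('a \<Rightarrow> 'a) \<Rightarrow> bool" where
  "bimorphism V E g \<longleftrightarrow> is_hom E V V g \<and> bij_betw g V V"

definition HE_homogeneous :: "'a set \<Rightarrow> ('a \<Rightarrow> 'a \<Rightarrow> bool) \<Rightarrow> bool" where
  "HE_homogeneous V E \<longleftrightarrow>
     (\<forall>A B f. finite A \<and> finite B \<and> A \<subseteq> V \<and> B \<subseteq> V \<and> is_hom E A B f \<longrightarrow>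
        (\<exists>g. surj_endo V E g \<and> (\<forall>x\<in>A. g x = f x)))"

definition MB_homogeneous :: "'a set \<Rightarrow> ('a \<Rightarrow> 'a \<Rightarrow> bool) \<Rightarrow> bool" where
  "MB_homogeneous V E \<longleftrightarrow>
     (\<forall>A B f. finite A \<and> finite B \<and> A \<subseteq> V \<and> B \<subseteq> V \<and> is_mono E A B f \<longrightarrow>
        (\<exists>g. bimorphism V E g \<and> (\<forall>x\<in>A. g x = f x)))"

definition prop_star :: "'a set \<Rightarrow> ('a \<Rightarrow> 'a \<Rightarrow> bool) \<Rightarrow> bool" where
  "prop_star V E \<longleftrightarrow>
     (\<forall>A B f c. finite A \<and> finite B \<and> A \<subseteq> V \<and> B \<subseteq> V \<and> is_mono E A B f \<and> f ` A = B
        \<and> c \<in> V \<and> c \<notin> A \<longrightarrow>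
        (\<exists>d. d \<in> V \<and> d \<notin> B \<and> is_hom E (insert c A) V (f(c := d))))"

end

theory Submission
  imports Defs
begin

definition good :: "'a set \<Rightarrow> ('a \<Rightarrow> 'a \<Rightarrow> bool) \<Rightarrow> 'a set \<Rightarrow> ('a \<Rightarrow> 'a) \<Rightarrow> bool" where
  "good V E D h \<longleftrightarrow> finite D \<and> D \<subseteq> V \<and> h ` D \<subseteq> V \<and> inj_on h D \<and>
     (\<forall>x\<in>D. \<forall>y\<in>D. E x y \<longrightarrow> E (h x) (h y))"

lemma forth_step:
  assumes ps: "prop_star V E" and g: "good V E D h" and c: "c \<in> V"
  shows "\<exists>h'. good V E (insert c D) h' \<and> (\<forall>x\<in>D. h' x = h x)"
proof (cases "c \<in> D")
  case True then show ?thesis using g by (metis insert_absorb)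
next
  case False
  have D: "finite D" "D \<subseteq> V" "h`D \<subseteq> V" "inj_on h D"
    and hom: "\<forall>x\<in>D. \<forall>y\<in>D. E x y \<longrightarrow> E (h x) (h y)" using g unfolding good_def by auto
  then have m: "is_mono E D (h`D) h" unfolding is_mono_def is_hom_def by auto
  obtain d where d: "d \<in> V" "d \<notin> h`D" "is_hom E (insert c D) V (h(c:=d))"
    using ps[unfolded prop_star_def, rule_format, of D "h`D" h c] D m False c by auto
  have "good V E (insert c D) (h(c:=d))"
    unfolding good_def
  proof (intro conjI)
    show "finite (insert c D)" using D by auto
    show "insert c D \<subseteq> V" using D c by auto
    show "(h(c := d)) ` insert c D \<subseteq> V" using d(3) unfolding is_hom_def by auto
    have "(h(c := d)) ` D = h ` D" using False by (auto simp: image_def)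
    then show "inj_on (h(c := d)) (insert c D)" using D(4) d(2) False
      by (auto simp: inj_on_def)
    show "\<forall>x\<in>insert c D. \<forall>y\<in>insert c D. E x y \<longrightarrow> E ((h(c := d)) x) ((h(c := d)) y)"
      using d(3) unfolding is_hom_def by auto
  qed
  then show ?thesis using False by auto
qed

lemma back_step:
  assumes he: "HE_homogeneous V E" and g: "good V E D h" and dV: "d \<in> V"
  shows "\<exists>D' h'. good V E D' h' \<and> D \<subseteq> D' \<and> (\<forall>x\<in>D. h' x = h x) \<and> d \<in> h' ` D'"
proof (cases "d \<in> h ` D")
  case True then show ?thesis using g by blast
next
  case False
  have D: "finite D" "D \<subseteq> V" "h`D \<subseteq> V" "inj_on h D"
    and hom: "\<forall>x\<in>D. \<forall>y\<in>D. E x y \<longrightarrow> E (h x) (h y)" using g unfolding good_def by auto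
  then have m: "is_hom E D (h`D) h" unfolding is_hom_def by auto
  obtain gg where gg: "surj_endo V E gg" "\<forall>x\<in>D. gg x = h x"
    using he[unfolded HE_homogeneous_def, rule_format, of D "h`D" h] D m by auto
  have "d \<in> gg ` V" using gg(1) dV unfolding surj_endo_def by auto
  then obtain c where c: "c \<in> V" "gg c = d" by auto
  have cD: "c \<notin> D" using c gg(2) False by force
  have eq: "\<forall>x\<in>insert c D. (h(c:=d)) x = gg x" using gg(2) c cD by auto
  have "good V E (insert c D) (h(c:=d))"
    unfolding good_def
  proof (intro conjI)
    show "finite (insert c D)" using D by auto
    show "insert c D \<subseteq> V" using D c by auto
    show "(h(c := d)) ` insert c D \<subseteq> V" using D dV cD by auto
    have "(h(c := d)) ` D = h ` D" using cD by (auto simp: image_def)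
    then show "inj_on (h(c := d)) (insert c D)" using D(4) False cD
      by (auto simp: inj_on_def)
    show "\<forall>x\<in>insert c D. \<forall>y\<in>insert c D. E x y \<longrightarrow> E ((h(c := d)) x) ((h(c := d)) y)"
    proof (intro ballI impI)
      fix x y assume xy: "x \<in> insert c D" "y \<in> insert c D" "E x y"
      have "E (gg x) (gg y)" using gg(1) xy D c unfolding surj_endo_def is_hom_def by blast
      then show "E ((h(c := d)) x) ((h(c := d)) y)" using eq xy by metis
    qed
  qed
  then show ?thesis using cD by (intro exI[of _ "insert c D"] exI[of _ "h(c:=d)"]) auto
qed

lemma step_ex:
  assumes ps: "prop_star V E" and he: "HE_homogeneous V E" and g: "good V E D h" and x: "x \<in> V"
  shows "\<exists>D' h'. good V E D' h' \<and> D \<subseteq> D' \<and> (\<forall>y\<in>D. h' y = h y) \<and> x \<in> D' \<and> x \<in> h' ` D'"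
proof -
  obtain h1 where h1: "good V E (insert x D) h1" "\<forall>y\<in>D. h1 y = h y" using forth_step[OF ps g x] by auto
  obtain D2 h2 where h2: "good V E D2 h2" "insert x D \<subseteq> D2" "\<forall>y\<in>insert x D. h2 y = h1 y" "x \<in> h2 ` D2"
    using back_step[OF he h1(1) x] by auto
  show ?thesis using h1 h2 by (intro exI[of _ D2] exI[of _ h2]) auto
qed

theorem proposition4p6:
  fixes V :: "'a set" and E :: "'a \<Rightarrow> 'a \<Rightarrow> bool"
  assumes "graph V E"
    and "countable V" and "infinite V"
    and "HE_homogeneous V E"
    and "prop_star V E"
  shows "MB_homogeneous V E"
  unfolding MB_homogeneous_def
proof (intro allI impI)
  fix A B f
  assume H: "finite A \<and> finite B \<and> A \<subseteq> V \<and> B \<subseteq> V \<and> is_mono E A B f"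
  define v where "v = from_nat_into V"
  define stp where "stp = (\<lambda>(D, h) n. SOME p. good V E (fst p) (snd p) \<and> D \<subseteq> fst p \<and>
      (\<forall>y\<in>D. snd p y = h y) \<and> v n \<in> fst p \<and> v n \<in> snd p ` fst p)"
  define sq where "sq = rec_nat (A, f) (\<lambda>n p. stp p n)"
  have sq0: "sq 0 = (A, f)" unfolding sq_def by simp
  have sqS: "sq (Suc n) = stp (sq n) n" for n unfolding sq_def by simp
  have vV: "v n \<in> V" for n unfolding v_def
    using assms(3) by (metis from_nat_into infinite_imp_nonempty)
  have g0: "good V E A f" using H unfolding good_def is_mono_def is_hom_def by auto
  have stepP: "good V E (fst (sq (Suc n))) (snd (sq (Suc n))) \<and> fst (sq n) \<subseteq> fst (sq (Suc n)) \<and>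
      (\<forall>y\<in>fst (sq n). snd (sq (Suc n)) y = snd (sq n) y) \<and> v n \<in> fst (sq (Suc n)) \<and>
      v n \<in> snd (sq (Suc n)) ` fst (sq (Suc n))"
    if "good V E (fst (sq n)) (snd (sq n))" for n
  proof -
    obtain D h where Dh: "sq n = (D, h)" by fastforce
    have "\<exists>p. good V E (fst p) (snd p) \<and> D \<subseteq> fst p \<and>
      (\<forall>y\<in>D. snd p y = h y) \<and> v n \<in> fst p \<and> v n \<in> snd p ` fst p"
      using step_ex[OF assms(5) assms(4) _ vV, of D h n] that Dh by auto
    then have "good V E (fst (stp (D,h) n)) (snd (stp (D,h) n)) \<and> D \<subseteq> fst (stp (D,h) n) \<and>
      (\<forall>y\<in>D. snd (stp (D,h) n) y = h y) \<and> v n \<in> fst (stp (D,h) n) \<and>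
      v n \<in> snd (stp (D,h) n) ` fst (stp (D,h) n)"
      unfolding stp_def by (simp, rule someI_ex)
    then show ?thesis using Dh sqS by simp
  qed
  have goodn: "good V E (fst (sq n)) (snd (sq n))" for n
  proof (induction n)
    case 0 show ?case using g0 sq0 by simp
  next
    case (Suc n) show ?case using stepP[OF Suc.IH] by blast
  qed
  have mono: "fst (sq m) \<subseteq> fst (sq n) \<and> (\<forall>y\<in>fst (sq m). snd (sq n) y = snd (sq m) y)"
    if "m \<le> n" for m n
    using that
  proof (induction n rule: dec_induct)
    case base then show ?case by auto
  next
    case (step k)
    then show ?case using stepP[OF goodn[of k]] by auto
  qed
  define N where "N = (\<lambda>x. SOME n. x \<in> fst (sq n))"
  define g where "g = (\<lambda>x. snd (sq (N x)) x)"
  have gN: "g x = snd (sq n) x" if "x \<in> fst (sq n)" for x n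
  proof -
    have "x \<in> fst (sq (N x))" unfolding N_def using that by (rule someI)
    then show ?thesis unfolding g_def
      using mono[of "N x" "max n (N x)"] mono[of n "max n (N x)"] that by auto
  qed
  have cover: "\<exists>n. x \<in> fst (sq n) \<and> x \<in> snd (sq n) ` fst (sq n)" if "x \<in> V" for x
  proof -
    obtain n where "v n = x" using from_nat_into_surj[OF assms(2) \<open>x \<in> V\<close>] v_def by auto
    then show ?thesis using stepP[OF goodn[of n]] by blast
  qed
  have both: "\<exists>n. x \<in> fst (sq n) \<and> y \<in> fst (sq n)" if xy: "x \<in> V" "y \<in> V" for x y
  proof -
    obtain n1 where "x \<in> fst (sq n1)" using cover xy(1) by blast
    moreover obtain n2 where "y \<in> fst (sq n2)" using cover xy(2) by blast
    ultimately show ?thesis using mono[of n1 "max n1 n2"] mono[of n2 "max n1 n2"] by auto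
  qed
  have gd: "good V E (fst (sq n)) g" for n
  proof -
    have e: "\<forall>x\<in>fst (sq n). g x = snd (sq n) x" using gN by blast
    have G: "finite (fst (sq n))" "fst (sq n) \<subseteq> V" "snd (sq n) ` fst (sq n) \<subseteq> V"
      "inj_on (snd (sq n)) (fst (sq n))"
      "\<forall>x\<in>fst (sq n). \<forall>y\<in>fst (sq n). E x y \<longrightarrow> E (snd (sq n) x) (snd (sq n) y)"
      using goodn[of n] unfolding good_def by blast+
    have i: "g ` fst (sq n) = snd (sq n) ` fst (sq n)" using e by (intro image_cong) auto
    have j: "inj_on g (fst (sq n))" using G(4) e by (metis inj_on_cong)
    show ?thesis unfolding good_def
    proof (intro conjI)
      show "\<forall>x\<in>fst (sq n). \<forall>y\<in>fst (sq n). E x y \<longrightarrow> E (g x) (g y)"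
        using G(5) e by metis
    qed (use G i j in auto)
  qed
  have "bimorphism V E g"
    unfolding bimorphism_def is_hom_def bij_betw_def
  proof (intro conjI)
    show "g ` V \<subseteq> V"
    proof
      fix y assume "y \<in> g ` V"
      then obtain x where "x \<in> V" "y = g x" by auto
      then obtain n where "x \<in> fst (sq n)" using cover by blast
      then show "y \<in> V" using gd[of n] \<open>y = g x\<close> unfolding good_def by auto
    qed
    show "\<forall>x\<in>V. \<forall>y\<in>V. E x y \<longrightarrow> E (g x) (g y)"
    proof (intro ballI impI)
      fix x y assume "x \<in> V" "y \<in> V" "E x y"
      then obtain n where "x \<in> fst (sq n)" "y \<in> fst (sq n)" using both by blast
      then show "E (g x) (g y)" using gd[of n] \<open>E x y\<close> unfolding good_def by auto
    qed
    show "inj_on g V"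
    proof (rule inj_onI)
      fix x y assume "x \<in> V" "y \<in> V" "g x = g y"
      then obtain n where "x \<in> fst (sq n)" "y \<in> fst (sq n)" using both by blast
      then show "x = y" using gd[of n] \<open>g x = g y\<close> unfolding good_def inj_on_def by auto
    qed
    show "g ` V = V"
    proof
      show "g ` V \<subseteq> V"
      proof
        fix y assume "y \<in> g ` V"
        then obtain x where "x \<in> V" "y = g x" by auto
        then obtain n where "x \<in> fst (sq n)" using cover by blast
        then show "y \<in> V" using gd[of n] \<open>y = g x\<close> unfolding good_def by auto
      qed
      show "V \<subseteq> g ` V"
      proof
        fix y assume "y \<in> V"
        then obtain n where n: "y \<in> snd (sq n) ` fst (sq n)" using cover by blast
        then obtain x where x: "x \<in> fst (sq n)" "y = snd (sq n) x" by auto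
        then have "y = g x" using gN by auto
        moreover have "x \<in> V" using x goodn[of n] unfolding good_def by auto
        ultimately show "y \<in> g ` V" by auto
      qed
    qed
  qed
  moreover have "\<forall>x\<in>A. g x = f x" using gN[of _ 0] sq0 by auto
  ultimately show "\<exists>g. bimorphism V E g \<and> (\<forall>x\<in>A. g x = f x)" by blast
qed

end
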